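(* Let $\mathbf{Q}=\langle Q;\oplus,-,{}^+,{}^-,0,1\rangle$ be a strong quasi-MV* algebra. For $x,y\in Q$ define $x\to y:=-x\oplus y$ and $\neg x:=-x$. Then $f(\mathbf{Q})=\langle Q;\to,\neg,{}^+,{}^-,1\rangle$ is a strong quasi-Wajsberg* algebra (with $x\vee y:=((x^{+}\to y^{+})^{+}\to(\neg x)^{-})\to((y^{-}\to x^{-})^{-}\to x^{-})$).
   Context: A quasi-MV* algebra is an algebra $\langle A;\oplus,-,{}^{+},{}^{-},0,1\rangle$ of type $\langle 2,1,1,1,0,0\rangle$ (${}^+,{}^-$ bind more tightly than $-$, which binds more tightly than $\oplus$; $-1$ denotes $-(1)$) such that for all $x,y,z$: (1) $x\oplus y=y\oplus x$; (2) $(1\oplus x)\oplus(y\oplus(1\oplus z))=((1\oplus x)\oplus y)\oplus(1\oplus z)$; (3) $(x\oplus 1)\oplus 1=1$; (4) $(x\oplus y)\oplus 0=x\oplus y$; (5) $x^{+}\oplus 0=(x\oplus 0)^{+}=1\oplus(-1\oplus x)$ and $x^{-}\oplus 0=(x\oplus 0)^{-}=-1\oplus(1\oplus x)$; (6) $x\oplus y=(x^{+}\oplus y^{+})\oplus(x^{-}\oplus y^{-})$; (7) $0=-0$; (8) $x\oplus(-x)=0$; (9) $-(x\oplus y)=(-x)\oplus(-y)$; (10) $-(-x)=x$; (11) $(-x\oplus(x\oplus y))^{+}=-x^{+}\oplus(x^{+}\oplus y^{+})$; (12) $x\vee y=y\vee x$; (13) $x\vee(y\vee z)=(x\vee y)\vee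 z$; (14) $x\oplus(y\vee z)=(x\oplus y)\vee(x\oplus z)$; where $x\vee y:=(x^{+}\oplus(-x^{+}\oplus y^{+})^{+})\oplus(x^{-}\oplus(-x^{-}\oplus y^{-})^{+})$. A strong quasi-MV* algebra is a quasi-MV* algebra satisfying $x^+=x^+\oplus 0$ and $x^-=x^-\oplus 0$. A quasi-Wajsberg* algebra is an algebra $\langle W;\to,\neg,{}^+,{}^-,1\rangle$ of type $\langle 2,1,1,1,0\rangle$ (${}^+,{}^-$ bind more tightly than $\neg$, which binds more tightly than $\to$) such that for all $x,y,z$: (1) $x\to y=\neg y\to\neg x$; (2) $(x\to 1)\to((y\to 1)\to z)=(y\to 1)\to((x\to 1)\to z)$; (3) $(1\to x)\to 1=1$; (4) $(z\to z)\to(x\to y)=x\to y$; (5) $(1\to 1)\to x^{+}=((1\to 1)\to x)^{+}=(x\to 1)\to 1$ and $(1\to 1)\to x^{-}=((1\to 1)\to x)^{-}=(x\to\neg 1)\to\neg 1$; (6) $x\to y=(y^{+}\to x^{-})\to(x^{+}\to y^{-})$; (7) $\neg(x\to y)=y\to x$; (8) $\neg\neg x=x$; (9) $(x\to(\neg x\to y))^{+}=x^{+}\to(\neg x^{+}\to y^{+})$; (10) $x\vee y=y\vee x$; (11) $x\vee(y\vee z)=(x\vee y)\vee z$; (12) $x\to(y\vee z)=(x\to y)\vee(x\to z)$; where $x\vee y:=((x^{+}\to y^{+})^{+}\to(\neg x)^{-})\to((y^{-}\to x^{-})^{-}\to x^{-})$. A strong quasi-Wajsberg* algebra is a quasi-Wajsberg*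 algebra satisfying $x^+=(1\to 1)\to x^+$ and $x^-=(1\to 1)\to x^-$ for all $x$. *)

theory Defs
  imports Main
begin

text \<open>Quasi-MV* algebras, with carrier the whole type 'a.
  Operations: oplus (binary), neg (the unary minus), pl (^+), mi (^-), zero, one.\<close>

definition qmv_join :: "('a \<Rightarrow> 'a \<Rightarrow> 'a) \<Rightarrow> ('a \<Rightarrow> 'a) \<Rightarrow> ('a \<Rightarrow> 'a) \<Rightarrow> ('a \<Rightarrow> 'a) \<Rightarrow> 'a \<Rightarrow> 'a \<Rightarrow> 'a" where
  "qmv_join oplus neg pl mi x y =
     oplus (oplus (pl x) (pl (oplus (neg (pl x)) (pl y))))
           (oplus (mi x) (pl (oplus (neg (mi x)) (mi y))))"

definition quasi_MV_star ::
  "('a \<Rightarrow> 'a \<Rightarrow> 'a) \<Rightarrow> ('a \<Rightarrow> 'a) \<Rightarrow> ('a \<Rightarrow> 'a) \<Rightarrow> ('a \<Rightarrow> 'a) \<Rightarrow> 'a \<Rightarrow> 'a \<Rightarrow> bool" where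
  "quasi_MV_star oplus neg pl mi zero one \<longleftrightarrow>
    (\<forall>x y z.
      oplus x y = oplus y x \<and>
      oplus (oplus one x) (oplus y (oplus one z)) = oplus (oplus (oplus one x) y) (oplus one z) \<and>
      oplus (oplus x one) one = one \<and>
      oplus (oplus x y) zero = oplus x y \<and>
      oplus (pl x) zero = pl (oplus x zero) \<and>
      pl (oplus x zero) = oplus one (oplus (neg one) x) \<and>
      oplus (mi x) zero = mi (oplus x zero) \<and>
      mi (oplus x zero) = oplus (neg one) (oplus one x) \<and>
      oplus x y = oplus (oplus (pl x) (pl y)) (oplus (mi x) (mi y)) \<and>
      zero = neg zero \<and>
      oplus x (neg x) = zero \<and>
      neg (oplus x y) = oplus (neg x) (neg y) \<and>
      neg (neg x) = x \<and>
      pl (oplus (neg x) (oplus x y)) = oplus (neg (pl x)) (oplus (pl x) (pl y)) \<and>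
      qmv_join oplus neg pl mi x y = qmv_join oplus neg pl mi y x \<and>
      qmv_join oplus neg pl mi x (qmv_join oplus neg pl mi y z)
        = qmv_join oplus neg pl mi (qmv_join oplus neg pl mi x y) z \<and>
      oplus x (qmv_join oplus neg pl mi y z)
        = qmv_join oplus neg pl mi (oplus x y) (oplus x z))"

definition strong_quasi_MV_star ::
  "('a \<Rightarrow> 'a \<Rightarrow> 'a) \<Rightarrow> ('a \<Rightarrow> 'a) \<Rightarrow> ('a \<Rightarrow> 'a) \<Rightarrow> ('a \<Rightarrow> 'a) \<Rightarrow> 'a \<Rightarrow> 'a \<Rightarrow> bool" where
  "strong_quasi_MV_star oplus neg pl mi zero one \<longleftrightarrow>
    quasi_MV_star oplus neg pl mi zero one \<and>
    (\<forall>x. pl x = oplus (pl x) zero \<and> mi x = oplus (mi x) zero)"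

definition qw_join :: "('a \<Rightarrow> 'a \<Rightarrow> 'a) \<Rightarrow> ('a \<Rightarrow> 'a) \<Rightarrow> ('a \<Rightarrow> 'a) \<Rightarrow> ('a \<Rightarrow> 'a) \<Rightarrow> 'a \<Rightarrow> 'a \<Rightarrow> 'a" where
  "qw_join imp nt pl mi x y =
     imp (imp (pl (imp (pl x) (pl y))) (mi (nt x)))
         (imp (mi (imp (mi y) (mi x))) (mi x))"

definition quasi_Wajsberg_star ::
  "('a \<Rightarrow> 'a \<Rightarrow> 'a) \<Rightarrow> ('a \<Rightarrow> 'a) \<Rightarrow> ('a \<Rightarrow> 'a) \<Rightarrow> ('a \<Rightarrow> 'a) \<Rightarrow> 'a \<Rightarrow> bool" where
  "quasi_Wajsberg_star imp nt pl mi one \<longleftrightarrow>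
    (\<forall>x y z.
      imp x y = imp (nt y) (nt x) \<and>
      imp (imp x one) (imp (imp y one) z) = imp (imp y one) (imp (imp x one) z) \<and>
      imp (imp one x) one = one \<and>
      imp (imp z z) (imp x y) = imp x y \<and>
      imp (imp one one) (pl x) = pl (imp (imp one one) x) \<and>
      pl (imp (imp one one) x) = imp (imp x one) one \<and>
      imp (imp one one) (mi x) = mi (imp (imp one one) x) \<and>
      mi (imp (imp one one) x) = imp (imp x (nt one)) (nt one) \<and>
      imp x y = imp (imp (pl y) (mi x)) (imp (pl x) (mi y)) \<and>
      nt (imp x y) = imp y x \<and>
      nt (nt x) = x \<and>
      pl (imp x (imp (nt x) y)) = imp (pl x) (imp (nt (pl x)) (pl y)) \<and>
      qw_join imp nt pl mi x y = qw_join imp nt pl mi y x \<and>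
      qw_join imp nt pl mi x (qw_join imp nt pl mi y z)
        = qw_join imp nt pl mi (qw_join imp nt pl mi x y) z \<and>
      imp x (qw_join imp nt pl mi y z)
        = qw_join imp nt pl mi (imp x y) (imp x z))"

definition strong_quasi_Wajsberg_star ::
  "('a \<Rightarrow> 'a \<Rightarrow> 'a) \<Rightarrow> ('a \<Rightarrow> 'a) \<Rightarrow> ('a \<Rightarrow> 'a) \<Rightarrow> ('a \<Rightarrow> 'a) \<Rightarrow> 'a \<Rightarrow> bool" where
  "strong_quasi_Wajsberg_star imp nt pl mi one \<longleftrightarrow>
    quasi_Wajsberg_star imp nt pl mi one \<and>
    (\<forall>x. pl x = imp (imp one one) (pl x) \<and> mi x = imp (imp one one) (mi x))"

end

theory Submission
  imports Defs
begin

theorem proposition3p4: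
  fixes oplus :: "'a \<Rightarrow> 'a \<Rightarrow> 'a" and neg pl mi :: "'a \<Rightarrow> 'a" and zero one :: 'a
  assumes "strong_quasi_MV_star oplus neg pl mi zero one"
  shows "strong_quasi_Wajsberg_star (\<lambda>x y. oplus (neg x) y) neg pl mi one"
proof -
  have Q: "quasi_MV_star oplus neg pl mi zero one" and S: "\<And>x. pl x = oplus (pl x) zero" "\<And>x. mi x = oplus (mi x) zero"
    using assms unfolding strong_quasi_MV_star_def by auto
  note A = Q[unfolded quasi_MV_star_def]
  have comm: "\<And>x y. oplus x y = oplus y x" using A by blast
  have as1: "\<And>x y z. oplus (oplus one x) (oplus y (oplus one z)) = oplus (oplus (oplus one x) y) (oplus one z)" using A by blast
  have a3: "\<And>x. oplus (oplus x one) one = one" using A by blast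
  have a4: "\<And>x y. oplus (oplus x y) zero = oplus x y" using A by blast
  have a5: "\<And>x. oplus (pl x) zero = pl (oplus x zero)" "\<And>x. pl (oplus x zero) = oplus one (oplus (neg one) x)"
    "\<And>x. oplus (mi x) zero = mi (oplus x zero)" "\<And>x. mi (oplus x zero) = oplus (neg one) (oplus one x)" using A by blast+
  have z: "zero = neg zero" using A by blast
  have inv: "\<And>x. oplus x (neg x) = zero" using A by blast
  have nd: "\<And>x y. neg (oplus x y) = oplus (neg x) (neg y)" using A by blast
  have nn: "\<And>x. neg (neg x) = x" using A by blast
  have a11: "\<And>x y. pl (oplus (neg x) (oplus x y)) = oplus (neg (pl x)) (oplus (pl x) (pl y))" using A by blast
  have J: "\<And>x y z. qmv_join oplus neg pl mi x y = qmv_join oplus neg pl mi y x \<and>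
      qmv_join oplus neg pl mi x (qmv_join oplus neg pl mi y z)
        = qmv_join oplus neg pl mi (qmv_join oplus neg pl mi x y) z \<and>
      oplus x (qmv_join oplus neg pl mi y z)
        = qmv_join oplus neg pl mi (oplus x y) (oplus x z)" using A by blast
  have as2: "\<And>x y z. oplus (oplus (neg one) x) (oplus y (oplus (neg one) z)) = oplus (oplus (oplus (neg one) x) y) (oplus (neg one) z)"
  proof -
    fix x y z
    have "neg (oplus (oplus one (neg x)) (oplus (neg y) (oplus one (neg z)))) = neg (oplus (oplus (oplus one (neg x)) (neg y)) (oplus one (neg z)))"
      using as1 by simp
    then show "?thesis x y z" by (simp add: nd nn)
  qed
  have plneg: "\<And>x. pl (neg x) = neg (mi x)"
  proof -
    fix x
    have "pl (neg x) = pl (oplus (neg x) zero)" using S(1) a5(1) by metis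
    also have "\<dots> = oplus one (oplus (neg one) (neg x))" using a5 by metis
    also have "\<dots> = neg (mi (oplus x zero))" using a5(4) nd nn by simp
    also have "\<dots> = neg (oplus (mi x) zero)" using a5 by metis
    also have "\<dots> = neg (mi x)" using S(2) by metis
    finally show "?thesis x" .
  qed
  have mineg: "\<And>x. mi (neg x) = neg (pl x)" using plneg nn by metis
  have z0: "\<And>x. oplus zero x = oplus x zero" using comm by metis
  have r1: "\<And>x. neg (mi (neg x)) = pl x"
  proof -
    fix x show "?thesis x" using plneg[of "neg x"] by (simp only: nn)
  qed
  have r2: "\<And>a b. neg (mi (oplus (neg a) b)) = pl (oplus a (neg b))"
  proof -
    fix a b show "?thesis a b" using plneg[of "oplus (neg a) b"] by (simp only: nd nn)
  qed
  have joineq: "\<And>x y. qw_join (\<lambda>x y. oplus (neg x) y) neg pl mi x y = qmv_join oplus neg pl mi x y"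
    unfolding qw_join_def qmv_join_def
    by (simp only: r2, simp only: nd nn r1, simp add: comm)
  have zz: "neg (oplus (neg one) one) = zero" by (simp only: nd nn inv)
  show ?thesis
    unfolding strong_quasi_Wajsberg_star_def quasi_Wajsberg_star_def joineq zz
  proof (intro conjI allI)
    fix x y z
    show "oplus (neg x) y = oplus (neg (neg y)) (neg x)" by (simp add: nn comm)
    show "oplus (neg (oplus (neg x) one)) (oplus (neg (oplus (neg y) one)) z) =
       oplus (neg (oplus (neg y) one)) (oplus (neg (oplus (neg x) one)) z)"
      using as2[of x z y] by (simp add: nd nn comm)
    show "oplus (neg (oplus (neg one) x)) one = one" using a3[of "neg x"] by (simp add: nd nn comm)
    show "oplus (neg (oplus (neg z) z)) (oplus (neg x) y) = oplus (neg x) y"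
      by (simp only: nd nn inv, subst comm, rule a4)
    show "oplus zero (pl x) = pl (oplus zero x)" by (simp only: z0 a5(1))
    show "pl (oplus zero x) = oplus (neg (oplus (neg x) one)) one"
      by (simp only: z0 a5(2) nd nn, simp add: comm)
    show "oplus zero (mi x) = mi (oplus zero x)" by (simp only: z0 a5(3))
    show "mi (oplus zero x) = oplus (neg (oplus (neg x) (neg one))) (neg one)"
      by (simp only: z0 a5(4) nd nn, simp add: comm)
    show "oplus (neg x) y = oplus (neg (oplus (neg (pl y)) (mi x))) (oplus (neg (pl x)) (mi y))"
    proof -
      have "oplus (neg x) y = oplus (oplus (pl (neg x)) (pl y)) (oplus (mi (neg x)) (mi y))" using A by blast
      then show ?thesis by (simp only: plneg mineg nd nn, simp add: comm)
    qed
    show "neg (oplus (neg x) y) = oplus (neg y) x" by (simp add: nd nn comm)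
    show "neg (neg x) = x" by (rule nn)
    show "pl (oplus (neg x) (oplus (neg (neg x)) y)) = oplus (neg (pl x)) (oplus (neg (neg (pl x))) (pl y))"
      by (simp only: nn a11)
    show "qmv_join oplus neg pl mi x y = qmv_join oplus neg pl mi y x" using J by blast
    show "qmv_join oplus neg pl mi x (qmv_join oplus neg pl mi y z) = qmv_join oplus neg pl mi (qmv_join oplus neg pl mi x y) z" using J by blast
    show "oplus (neg x) (qmv_join oplus neg pl mi y z) = qmv_join oplus neg pl mi (oplus (neg x) y) (oplus (neg x) z)" using J by blast
    show "pl x = oplus zero (pl x)" by (simp only: z0 S(1)[symmetric])
    show "mi x = oplus zero (mi x)" by (simp only: z0 S(2)[symmetric])
  qed
qed

end
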